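(* Let $\mathcal{G}$ be the complete quadrilateral, let $R$ be a commutative ring with $2=0$, let $A=M_R(\mathcal{G},1)$ and let $A'=A/\operatorname{Ann}(A)$ (a $5$-dimensional algebra). For each of the $4$ lines $\ell$ of $\mathcal{G}$, let $A'^\ell_0$ and $A'^\ell_1$ be the eigenspaces of the operator $\operatorname{ad}_\ell$ on $A'$ for the eigenvalues $0$ and $1$. Then for each line $\ell$, $A'=A'^\ell_0\oplus A'^\ell_1$ and \[ A'^\ell_0A'^\ell_0\subseteq A'^\ell_0,\quad A'^\ell_0A'^\ell_1\subseteq A'^\ell_1,\quad A'^\ell_1A'^\ell_1=0, \] i.e. $A'$ is a decomposition algebra with fusion law $0*0=\{0\}$, $0*1=1*0=\{1\}$, $1*1=\emptyset$. Moreover, the subspaces $A'^\ell_1$ coincide for all $4$ choices of $\ell$.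
   Context: The complete quadrilateral is the partial linear space with $6$ points $a,b,c,x,y,z$ and $4$ lines $\{a,b,c\}$, $\{a,y,z\}$, $\{b,x,z\}$, $\{c,x,y\}$. For distinct collinear points $p,q$ (written $p\sim q$), $p\wedge q$ is the third point of their line. The nilpotent Matsuo algebra $A=M_R(\mathcal{G},1)$ is the free $R$-module with basis the points and commutative bilinear product $p\cdot q=0$ if $p=q$ or $p\not\sim q$, $p\cdot q=p+q+p\wedge q$ if $p\sim q$. $\operatorname{Ann}(A)=\{v\in A: vw=0\ \forall w\in A\}$, and $A'=A/\operatorname{Ann}(A)$ with induced product. For a line $\ell$ we write $\ell$ also for the sum of its three points, and $\operatorname{ad}_\ell(v)=\ell v$ (also on $A'$). *)

theory Defs
  imports Main
begin

datatype pt = Pa | Pb | Pc | Px | Py | Pz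

definition pts :: "pt set" where
  "pts = {Pa, Pb, Pc, Px, Py, Pz}"

definition lines :: "pt set set" where
  "lines = {{Pa, Pb, Pc}, {Pa, Py, Pz}, {Pb, Px, Pz}, {Pc, Px, Py}}"

definition coll :: "pt \<Rightarrow> pt \<Rightarrow> bool" where
  "coll p q \<longleftrightarrow> p \<noteq> q \<and> (\<exists>L\<in>lines. p \<in> L \<and> q \<in> L)"

definition wedge :: "pt \<Rightarrow> pt \<Rightarrow> pt" where
  "wedge p q = (THE r. r \<noteq> p \<and> r \<noteq> q \<and> (\<exists>L\<in>lines. {p, q, r} \<subseteq> L))"

text \<open>Elements of A = M_R(G,1) are coefficient functions pt => R (free module on the points).\<close>
definition bvec :: "pt \<Rightarrow> pt \<Rightarrow> 'r::comm_ring_1" where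
  "bvec p = (\<lambda>r. if r = p then 1 else 0)"

definition bprod :: "pt \<Rightarrow> pt \<Rightarrow> pt \<Rightarrow> 'r::comm_ring_1" where
  "bprod p q = (if p = q \<or> \<not> coll p q then (\<lambda>r. 0)
               else (\<lambda>r. bvec p r + bvec q r + bvec (wedge p q) r))"

definition mmult :: "(pt \<Rightarrow> 'r::comm_ring_1) \<Rightarrow> (pt \<Rightarrow> 'r) \<Rightarrow> (pt \<Rightarrow> 'r)" where
  "mmult v w = (\<lambda>r. \<Sum>p\<in>pts. \<Sum>q\<in>pts. v p * w q * bprod p q r)"

definition linevec :: "pt set \<Rightarrow> pt \<Rightarrow> 'r::comm_ring_1" where
  "linevec L = (\<lambda>r. if r \<in> L then 1 else 0)"

definition Ann :: "(pt \<Rightarrow> 'r::comm_ring_1) set" where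
  "Ann = {v. \<forall>w. mmult v w = (\<lambda>r. 0)}"

text \<open>Preimage in A of the eigenspace of ad_L on A' = A/Ann(A) for eigenvalue mu:
  [v] is a mu-eigenvector of ad_L on A' iff L v - mu v lies in Ann(A).\<close>
definition eigsp :: "pt set \<Rightarrow> 'r::comm_ring_1 \<Rightarrow> (pt \<Rightarrow> 'r) set" where
  "eigsp L mu = {v. (\<lambda>r. mmult (linevec L) v r - mu * v r) \<in> Ann}"

end

theory Submission
  imports Defs
begin

lemma wedge_eq:
  assumes "r \<noteq> p" "r \<noteq> q" "\<exists>L\<in>lines. {p,q,r} \<subseteq> L"
    "\<And>r'. r' \<noteq> p \<Longrightarrow> r' \<noteq> q \<Longrightarrow> \<exists>L\<in>lines. {p,q,r'} \<subseteq> L \<Longrightarrow> r' = r"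
  shows "wedge p q = r"
  unfolding wedge_def
proof (rule the_equality)
  show "r \<noteq> p \<and> r \<noteq> q \<and> (\<exists>L\<in>lines. {p, q, r} \<subseteq> L)" using assms(1-3) by blast
next
  fix r' assume "r' \<noteq> p \<and> r' \<noteq> q \<and> (\<exists>L\<in>lines. {p, q, r'} \<subseteq> L)"
  then show "r' = r" using assms(4) by blast
qed

lemma ex_lines: "(\<exists>L\<in>lines. {p,q,r} \<subseteq> L) \<longleftrightarrow>
   ({p,q,r} \<subseteq> {Pa, Pb, Pc} \<or> {p,q,r} \<subseteq> {Pa, Py, Pz} \<or> {p,q,r} \<subseteq> {Pb, Px, Pz} \<or> {p,q,r} \<subseteq> {Pc, Px, Py})"
  unfolding lines_def by simp

fun w3 :: "pt \<Rightarrow> pt \<Rightarrow> pt" where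
  "w3 Pa Pb = Pc" | "w3 Pb Pa = Pc" | "w3 Pa Pc = Pb" | "w3 Pc Pa = Pb"
| "w3 Pb Pc = Pa" | "w3 Pc Pb = Pa"
| "w3 Pa Py = Pz" | "w3 Py Pa = Pz" | "w3 Pa Pz = Py" | "w3 Pz Pa = Py"
| "w3 Py Pz = Pa" | "w3 Pz Py = Pa"
| "w3 Pb Px = Pz" | "w3 Px Pb = Pz" | "w3 Pb Pz = Px" | "w3 Pz Pb = Px"
| "w3 Px Pz = Pb" | "w3 Pz Px = Pb"
| "w3 Pc Px = Py" | "w3 Px Pc = Py" | "w3 Pc Py = Px" | "w3 Py Pc = Px"
| "w3 Px Py = Pc" | "w3 Py Px = Pc"
| "w3 _ _ = Pa"

lemma coll_simps:
  "coll p q \<longleftrightarrow> p \<noteq> q \<and> {p,q} \<noteq> {Pa,Px} \<and> {p,q} \<noteq> {Pb,Py} \<and> {p,q} \<noteq> {Pc,Pz}"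
  unfolding coll_def lines_def by (cases p; cases q) auto

lemma wedge_w3: "coll p q \<Longrightarrow> wedge p q = w3 p q"
  unfolding coll_simps
  apply (cases p; cases q; simp add: insert_commute doubleton_eq_iff)
  apply (rule wedge_eq; simp add: lines_def)+
  done
lemma bp: "bprod p q r = (if coll p q \<and> (r = p \<or> r = q \<or> r = w3 p q) then 1 else 0)"
  unfolding bprod_def bvec_def
  by (cases p; cases q; cases r; simp add: wedge_w3 coll_simps doubleton_eq_iff)

definition cl :: "pt \<Rightarrow> pt \<Rightarrow> pt \<Rightarrow> (pt \<Rightarrow> 'r::comm_ring_1) \<Rightarrow> (pt \<Rightarrow> 'r) \<Rightarrow> 'r" where
  "cl p q r v w = v p * w q + v q * w p + v p * w r + v r * w p + v q * w r + v r * w q"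

lemma sum_pts: "(\<Sum>p\<in>pts. f p) = f Pa + f Pb + f Pc + f Px + f Py + f Pz"
  by (simp add: pts_def add.assoc)

lemma mm:
  "mmult v w Pa = cl Pa Pb Pc v w + cl Pa Py Pz v w"
  "mmult v w Pb = cl Pa Pb Pc v w + cl Pb Px Pz v w"
  "mmult v w Pc = cl Pa Pb Pc v w + cl Pc Px Py v w"
  "mmult v w Px = cl Pb Px Pz v w + cl Pc Px Py v w"
  "mmult v w Py = cl Pa Py Pz v w + cl Pc Px Py v w"
  "mmult v w Pz = cl Pa Py Pz v w + cl Pb Px Pz v w"
  unfolding mmult_def sum_pts bp cl_def
  by (simp_all add: coll_simps doubleton_eq_iff)


context assumes two: "(2::'r::comm_ring_1) = 0" begin
lemma xx: "(x::'r) + x = 0" by (metis mult_2 mult_zero_left two)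
lemma xxy: "(x::'r) + (x + y) = y" by (metis add.assoc add_0 xx)
lemma negx: "- (x::'r) = x" using xx[of x] by (simp add: neg_eq_iff_add_eq_0)
lemma minusx: "(x::'r) - y = x + y" by (simp add: negx)
lemma c2I: "(x::'r) + y = 0 \<Longrightarrow> x = y" by (metis add_diff_cancel_left' diff_0 minusx add_0 add.commute negx)
end
lemmas m2 = xx xxy negx minusx distrib_left distrib_right add_ac mult_ac

lemma Ann_iff:
  assumes two: "(2::'r::comm_ring_1) = 0"
  shows "((f::pt \<Rightarrow> 'r) \<in> Ann) \<longleftrightarrow> (f Pb = f Pa \<and> f Pc = f Pa \<and> f Px = f Pa \<and> f Py = f Pa \<and> f Pz = f Pa)"
proof
  assume "f \<in> Ann"
  then have h: "\<And>w. mmult f w = (\<lambda>r. 0)" unfolding Ann_def by auto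
  have a1: "f Pb = f Pc" "f Py = f Pz"
    using fun_cong[OF h[of "bvec Pa"], of Pb] fun_cong[OF h[of "bvec Pa"], of Py]
    by (simp_all add: mm cl_def bvec_def c2I[OF two])
  have a2: "f Pa = f Pb" "f Px = f Py"
    using fun_cong[OF h[of "bvec Pc"], of Pa] fun_cong[OF h[of "bvec Pc"], of Px]
    by (simp_all add: mm cl_def bvec_def c2I[OF two])
  have a3: "f Pb = f Pz"
    using fun_cong[OF h[of "bvec Px"], of Pb]
    by (simp_all add: mm cl_def bvec_def c2I[OF two])
  show "f Pb = f Pa \<and> f Pc = f Pa \<and> f Px = f Pa \<and> f Py = f Pa \<and> f Pz = f Pa"
    using a1 a2 a3 by simp
next
  assume h: "f Pb = f Pa \<and> f Pc = f Pa \<and> f Px = f Pa \<and> f Py = f Pa \<and> f Pz = f Pa"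
  show "f \<in> Ann" unfolding Ann_def
  proof (simp, rule allI, rule ext)
    fix w :: "pt \<Rightarrow> 'r" and r
    show "mmult f w r = 0" using h two by (cases r; simp add: mm cl_def m2)
  qed
qed


fun opp :: "pt \<Rightarrow> pt" where
  "opp Pa = Px" | "opp Px = Pa" | "opp Pb = Py" | "opp Py = Pb" | "opp Pc = Pz" | "opp Pz = Pc"

lemma eig0_1:
  assumes two: "(2::'r::comm_ring_1) = 0"
  shows "((v::pt\<Rightarrow>'r) \<in> eigsp {Pa,Pb,Pc} 0) \<longleftrightarrow> v Py = v Px \<and> v Pz = v Px"
  unfolding eigsp_def mem_Collect_eq Ann_iff[OF two]
  by (simp add: mm cl_def linevec_def m2 two; auto simp: add_ac)

lemma eig1_1:
  assumes two: "(2::'r::comm_ring_1) = 0"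
  shows "((v::pt\<Rightarrow>'r) \<in> eigsp {Pa,Pb,Pc} 1) \<longleftrightarrow> v Px = v Pa \<and> v Py = v Pb \<and> v Pz = v Pc"
  unfolding eigsp_def mem_Collect_eq Ann_iff[OF two]
  by (simp add: mm cl_def linevec_def m2 two; auto simp: add_ac)

lemma props_1:
  assumes two: "(2::'r::comm_ring_1) = 0"
  shows "(\<forall>v::pt \<Rightarrow> 'r. \<exists>v0 v1. v0 \<in> eigsp {Pa,Pb,Pc} 0 \<and> v1 \<in> eigsp {Pa,Pb,Pc} 1 \<and> v = (\<lambda>r. v0 r + v1 r))
          \<and> eigsp {Pa,Pb,Pc} (0::'r) \<inter> eigsp {Pa,Pb,Pc} 1 \<subseteq> Ann
          \<and> (\<forall>v\<in>eigsp {Pa,Pb,Pc} (0::'r). \<forall>w\<in>eigsp {Pa,Pb,Pc} 0. mmult v w \<in> eigsp {Pa,Pb,Pc} 0)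
          \<and> (\<forall>v\<in>eigsp {Pa,Pb,Pc} (0::'r). \<forall>w\<in>eigsp {Pa,Pb,Pc} 1. mmult v w \<in> eigsp {Pa,Pb,Pc} 1)
          \<and> (\<forall>v\<in>eigsp {Pa,Pb,Pc} (1::'r). \<forall>w\<in>eigsp {Pa,Pb,Pc} 1. mmult v w \<in> Ann)"
proof (intro conjI allI ballI subsetI)
  fix v :: "pt \<Rightarrow> 'r"
  define v1 where "v1 = (\<lambda>r. if r \<in> {Pa,Pb,Pc} then v (opp r) else v r)"
  define v0 where "v0 = (\<lambda>r. v r - v1 r)"
  have "v0 \<in> eigsp {Pa,Pb,Pc} 0" unfolding eig0_1[OF two] v0_def v1_def by simp
  moreover have "v1 \<in> eigsp {Pa,Pb,Pc} 1" unfolding eig1_1[OF two] v1_def by simp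
  moreover have "v = (\<lambda>r. v0 r + v1 r)" unfolding v0_def by simp
  ultimately show "\<exists>v0 v1. v0 \<in> eigsp {Pa,Pb,Pc} 0 \<and> v1 \<in> eigsp {Pa,Pb,Pc} 1 \<and> v = (\<lambda>r. v0 r + v1 r)" by blast
next
  fix v :: "pt \<Rightarrow> 'r" assume "v \<in> eigsp {Pa,Pb,Pc} 0 \<inter> eigsp {Pa,Pb,Pc} 1"
  then show "v \<in> Ann" by (auto simp: eig0_1[OF two] eig1_1[OF two] Ann_iff[OF two])
next
  fix v w :: "pt \<Rightarrow> 'r" assume "v \<in> eigsp {Pa,Pb,Pc} 0" "w \<in> eigsp {Pa,Pb,Pc} 0"
  then show "mmult v w \<in> eigsp {Pa,Pb,Pc} 0"
    by (auto simp: eig0_1[OF two] mm cl_def m2 two)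
next
  fix v w :: "pt \<Rightarrow> 'r" assume "v \<in> eigsp {Pa,Pb,Pc} 0" "w \<in> eigsp {Pa,Pb,Pc} 1"
  then show "mmult v w \<in> eigsp {Pa,Pb,Pc} 1"
    by (auto simp: eig0_1[OF two] eig1_1[OF two] mm cl_def m2 two)
next
  fix v w :: "pt \<Rightarrow> 'r" assume "v \<in> eigsp {Pa,Pb,Pc} 1" "w \<in> eigsp {Pa,Pb,Pc} 1"
  then show "mmult v w \<in> Ann"
    by (auto simp: eig1_1[OF two] Ann_iff[OF two] mm cl_def m2 two)
qed

lemma eig0_2:
  assumes two: "(2::'r::comm_ring_1) = 0"
  shows "((v::pt\<Rightarrow>'r) \<in> eigsp {Pa,Py,Pz} 0) \<longleftrightarrow> v Pc = v Pb \<and> v Px = v Pb"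
  unfolding eigsp_def mem_Collect_eq Ann_iff[OF two]
  by (simp add: mm cl_def linevec_def m2 two; auto simp: add_ac)

lemma eig1_2:
  assumes two: "(2::'r::comm_ring_1) = 0"
  shows "((v::pt\<Rightarrow>'r) \<in> eigsp {Pa,Py,Pz} 1) \<longleftrightarrow> v Px = v Pa \<and> v Py = v Pb \<and> v Pz = v Pc"
  unfolding eigsp_def mem_Collect_eq Ann_iff[OF two]
  by (simp add: mm cl_def linevec_def m2 two; auto simp: add_ac)

lemma props_2:
  assumes two: "(2::'r::comm_ring_1) = 0"
  shows "(\<forall>v::pt \<Rightarrow> 'r. \<exists>v0 v1. v0 \<in> eigsp {Pa,Py,Pz} 0 \<and> v1 \<in> eigsp {Pa,Py,Pz} 1 \<and> v = (\<lambda>r. v0 r + v1 r))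
          \<and> eigsp {Pa,Py,Pz} (0::'r) \<inter> eigsp {Pa,Py,Pz} 1 \<subseteq> Ann
          \<and> (\<forall>v\<in>eigsp {Pa,Py,Pz} (0::'r). \<forall>w\<in>eigsp {Pa,Py,Pz} 0. mmult v w \<in> eigsp {Pa,Py,Pz} 0)
          \<and> (\<forall>v\<in>eigsp {Pa,Py,Pz} (0::'r). \<forall>w\<in>eigsp {Pa,Py,Pz} 1. mmult v w \<in> eigsp {Pa,Py,Pz} 1)
          \<and> (\<forall>v\<in>eigsp {Pa,Py,Pz} (1::'r). \<forall>w\<in>eigsp {Pa,Py,Pz} 1. mmult v w \<in> Ann)"
proof (intro conjI allI ballI subsetI)
  fix v :: "pt \<Rightarrow> 'r"
  define v1 where "v1 = (\<lambda>r. if r \<in> {Pa,Py,Pz} then v (opp r) else v r)"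
  define v0 where "v0 = (\<lambda>r. v r - v1 r)"
  have "v0 \<in> eigsp {Pa,Py,Pz} 0" unfolding eig0_2[OF two] v0_def v1_def by simp
  moreover have "v1 \<in> eigsp {Pa,Py,Pz} 1" unfolding eig1_2[OF two] v1_def by simp
  moreover have "v = (\<lambda>r. v0 r + v1 r)" unfolding v0_def by simp
  ultimately show "\<exists>v0 v1. v0 \<in> eigsp {Pa,Py,Pz} 0 \<and> v1 \<in> eigsp {Pa,Py,Pz} 1 \<and> v = (\<lambda>r. v0 r + v1 r)" by blast
next
  fix v :: "pt \<Rightarrow> 'r" assume "v \<in> eigsp {Pa,Py,Pz} 0 \<inter> eigsp {Pa,Py,Pz} 1"
  then show "v \<in> Ann" by (auto simp: eig0_2[OF two] eig1_2[OF two] Ann_iff[OF two])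
next
  fix v w :: "pt \<Rightarrow> 'r" assume "v \<in> eigsp {Pa,Py,Pz} 0" "w \<in> eigsp {Pa,Py,Pz} 0"
  then show "mmult v w \<in> eigsp {Pa,Py,Pz} 0"
    by (auto simp: eig0_2[OF two] mm cl_def m2 two)
next
  fix v w :: "pt \<Rightarrow> 'r" assume "v \<in> eigsp {Pa,Py,Pz} 0" "w \<in> eigsp {Pa,Py,Pz} 1"
  then show "mmult v w \<in> eigsp {Pa,Py,Pz} 1"
    by (auto simp: eig0_2[OF two] eig1_2[OF two] mm cl_def m2 two)
next
  fix v w :: "pt \<Rightarrow> 'r" assume "v \<in> eigsp {Pa,Py,Pz} 1" "w \<in> eigsp {Pa,Py,Pz} 1"
  then show "mmult v w \<in> Ann"
    by (auto simp: eig1_2[OF two] Ann_iff[OF two] mm cl_def m2 two)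
qed

lemma eig0_3:
  assumes two: "(2::'r::comm_ring_1) = 0"
  shows "((v::pt\<Rightarrow>'r) \<in> eigsp {Pb,Px,Pz} 0) \<longleftrightarrow> v Pc = v Pa \<and> v Py = v Pa"
  unfolding eigsp_def mem_Collect_eq Ann_iff[OF two]
  by (simp add: mm cl_def linevec_def m2 two; auto simp: add_ac)

lemma eig1_3:
  assumes two: "(2::'r::comm_ring_1) = 0"
  shows "((v::pt\<Rightarrow>'r) \<in> eigsp {Pb,Px,Pz} 1) \<longleftrightarrow> v Px = v Pa \<and> v Py = v Pb \<and> v Pz = v Pc"
  unfolding eigsp_def mem_Collect_eq Ann_iff[OF two]
  by (simp add: mm cl_def linevec_def m2 two; auto simp: add_ac)

lemma props_3:
  assumes two: "(2::'r::comm_ring_1) = 0"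
  shows "(\<forall>v::pt \<Rightarrow> 'r. \<exists>v0 v1. v0 \<in> eigsp {Pb,Px,Pz} 0 \<and> v1 \<in> eigsp {Pb,Px,Pz} 1 \<and> v = (\<lambda>r. v0 r + v1 r))
          \<and> eigsp {Pb,Px,Pz} (0::'r) \<inter> eigsp {Pb,Px,Pz} 1 \<subseteq> Ann
          \<and> (\<forall>v\<in>eigsp {Pb,Px,Pz} (0::'r). \<forall>w\<in>eigsp {Pb,Px,Pz} 0. mmult v w \<in> eigsp {Pb,Px,Pz} 0)
          \<and> (\<forall>v\<in>eigsp {Pb,Px,Pz} (0::'r). \<forall>w\<in>eigsp {Pb,Px,Pz} 1. mmult v w \<in> eigsp {Pb,Px,Pz} 1)
          \<and> (\<forall>v\<in>eigsp {Pb,Px,Pz} (1::'r). \<forall>w\<in>eigsp {Pb,Px,Pz} 1. mmult v w \<in> Ann)"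
proof (intro conjI allI ballI subsetI)
  fix v :: "pt \<Rightarrow> 'r"
  define v1 where "v1 = (\<lambda>r. if r \<in> {Pb,Px,Pz} then v (opp r) else v r)"
  define v0 where "v0 = (\<lambda>r. v r - v1 r)"
  have "v0 \<in> eigsp {Pb,Px,Pz} 0" unfolding eig0_3[OF two] v0_def v1_def by simp
  moreover have "v1 \<in> eigsp {Pb,Px,Pz} 1" unfolding eig1_3[OF two] v1_def by simp
  moreover have "v = (\<lambda>r. v0 r + v1 r)" unfolding v0_def by simp
  ultimately show "\<exists>v0 v1. v0 \<in> eigsp {Pb,Px,Pz} 0 \<and> v1 \<in> eigsp {Pb,Px,Pz} 1 \<and> v = (\<lambda>r. v0 r + v1 r)" by blast
next
  fix v :: "pt \<Rightarrow> 'r" assume "v \<in> eigsp {Pb,Px,Pz} 0 \<inter> eigsp {Pb,Px,Pz} 1"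
  then show "v \<in> Ann" by (auto simp: eig0_3[OF two] eig1_3[OF two] Ann_iff[OF two])
next
  fix v w :: "pt \<Rightarrow> 'r" assume "v \<in> eigsp {Pb,Px,Pz} 0" "w \<in> eigsp {Pb,Px,Pz} 0"
  then show "mmult v w \<in> eigsp {Pb,Px,Pz} 0"
    by (auto simp: eig0_3[OF two] mm cl_def m2 two)
next
  fix v w :: "pt \<Rightarrow> 'r" assume "v \<in> eigsp {Pb,Px,Pz} 0" "w \<in> eigsp {Pb,Px,Pz} 1"
  then show "mmult v w \<in> eigsp {Pb,Px,Pz} 1"
    by (auto simp: eig0_3[OF two] eig1_3[OF two] mm cl_def m2 two)
next
  fix v w :: "pt \<Rightarrow> 'r" assume "v \<in> eigsp {Pb,Px,Pz} 1" "w \<in> eigsp {Pb,Px,Pz} 1"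
  then show "mmult v w \<in> Ann"
    by (auto simp: eig1_3[OF two] Ann_iff[OF two] mm cl_def m2 two)
qed

lemma eig0_4:
  assumes two: "(2::'r::comm_ring_1) = 0"
  shows "((v::pt\<Rightarrow>'r) \<in> eigsp {Pc,Px,Py} 0) \<longleftrightarrow> v Pb = v Pa \<and> v Pz = v Pa"
  unfolding eigsp_def mem_Collect_eq Ann_iff[OF two]
  by (simp add: mm cl_def linevec_def m2 two; auto simp: add_ac)

lemma eig1_4:
  assumes two: "(2::'r::comm_ring_1) = 0"
  shows "((v::pt\<Rightarrow>'r) \<in> eigsp {Pc,Px,Py} 1) \<longleftrightarrow> v Px = v Pa \<and> v Py = v Pb \<and> v Pz = v Pc"
  unfolding eigsp_def mem_Collect_eq Ann_iff[OF two]
  by (simp add: mm cl_def linevec_def m2 two; auto simp: add_ac)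

lemma props_4:
  assumes two: "(2::'r::comm_ring_1) = 0"
  shows "(\<forall>v::pt \<Rightarrow> 'r. \<exists>v0 v1. v0 \<in> eigsp {Pc,Px,Py} 0 \<and> v1 \<in> eigsp {Pc,Px,Py} 1 \<and> v = (\<lambda>r. v0 r + v1 r))
          \<and> eigsp {Pc,Px,Py} (0::'r) \<inter> eigsp {Pc,Px,Py} 1 \<subseteq> Ann
          \<and> (\<forall>v\<in>eigsp {Pc,Px,Py} (0::'r). \<forall>w\<in>eigsp {Pc,Px,Py} 0. mmult v w \<in> eigsp {Pc,Px,Py} 0)
          \<and> (\<forall>v\<in>eigsp {Pc,Px,Py} (0::'r). \<forall>w\<in>eigsp {Pc,Px,Py} 1. mmult v w \<in> eigsp {Pc,Px,Py} 1)
          \<and> (\<forall>v\<in>eigsp {Pc,Px,Py} (1::'r). \<forall>w\<in>eigsp {Pc,Px,Py} 1. mmult v w \<in> Ann)"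
proof (intro conjI allI ballI subsetI)
  fix v :: "pt \<Rightarrow> 'r"
  define v1 where "v1 = (\<lambda>r. if r \<in> {Pc,Px,Py} then v (opp r) else v r)"
  define v0 where "v0 = (\<lambda>r. v r - v1 r)"
  have "v0 \<in> eigsp {Pc,Px,Py} 0" unfolding eig0_4[OF two] v0_def v1_def by simp
  moreover have "v1 \<in> eigsp {Pc,Px,Py} 1" unfolding eig1_4[OF two] v1_def by simp
  moreover have "v = (\<lambda>r. v0 r + v1 r)" unfolding v0_def by simp
  ultimately show "\<exists>v0 v1. v0 \<in> eigsp {Pc,Px,Py} 0 \<and> v1 \<in> eigsp {Pc,Px,Py} 1 \<and> v = (\<lambda>r. v0 r + v1 r)" by blast
next
  fix v :: "pt \<Rightarrow> 'r" assume "v \<in> eigsp {Pc,Px,Py} 0 \<inter> eigsp {Pc,Px,Py} 1"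
  then show "v \<in> Ann" by (auto simp: eig0_4[OF two] eig1_4[OF two] Ann_iff[OF two])
next
  fix v w :: "pt \<Rightarrow> 'r" assume "v \<in> eigsp {Pc,Px,Py} 0" "w \<in> eigsp {Pc,Px,Py} 0"
  then show "mmult v w \<in> eigsp {Pc,Px,Py} 0"
    by (auto simp: eig0_4[OF two] mm cl_def m2 two)
next
  fix v w :: "pt \<Rightarrow> 'r" assume "v \<in> eigsp {Pc,Px,Py} 0" "w \<in> eigsp {Pc,Px,Py} 1"
  then show "mmult v w \<in> eigsp {Pc,Px,Py} 1"
    by (auto simp: eig0_4[OF two] eig1_4[OF two] mm cl_def m2 two)
next
  fix v w :: "pt \<Rightarrow> 'r" assume "v \<in> eigsp {Pc,Px,Py} 1" "w \<in> eigsp {Pc,Px,Py} 1"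
  then show "mmult v w \<in> Ann"
    by (auto simp: eig1_4[OF two] Ann_iff[OF two] mm cl_def m2 two)
qed

lemma ball4: "P A \<Longrightarrow> P B \<Longrightarrow> P C \<Longrightarrow> P D \<Longrightarrow> \<forall>L\<in>{A,B,C,D}. P L"
  by simp

theorem corollary5p15:
  assumes "(2::'r::comm_ring_1) = 0"
  shows "(\<forall>L\<in>lines.
            (\<forall>v::pt \<Rightarrow> 'r. \<exists>v0 v1. v0 \<in> eigsp L 0 \<and> v1 \<in> eigsp L 1 \<and> v = (\<lambda>r. v0 r + v1 r))
          \<and> eigsp L (0::'r) \<inter> eigsp L 1 \<subseteq> Ann
          \<and> (\<forall>v\<in>eigsp L (0::'r). \<forall>w\<in>eigsp L 0. mmult v w \<in> eigsp L 0)
          \<and> (\<forall>v\<in>eigsp L (0::'r). \<forall>w\<in>eigsp L 1. mmult v w \<in> eigsp L 1)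
          \<and> (\<forall>v\<in>eigsp L (1::'r). \<forall>w\<in>eigsp L 1. mmult v w \<in> Ann))
        \<and> (\<forall>L\<in>lines. \<forall>L'\<in>lines. eigsp L (1::'r) = eigsp L' 1)"
proof
  show "\<forall>L\<in>lines.
            (\<forall>v::pt \<Rightarrow> 'r. \<exists>v0 v1. v0 \<in> eigsp L 0 \<and> v1 \<in> eigsp L 1 \<and> v = (\<lambda>r. v0 r + v1 r))
          \<and> eigsp L (0::'r) \<inter> eigsp L 1 \<subseteq> Ann
          \<and> (\<forall>v\<in>eigsp L (0::'r). \<forall>w\<in>eigsp L 0. mmult v w \<in> eigsp L 0)
          \<and> (\<forall>v\<in>eigsp L (0::'r). \<forall>w\<in>eigsp L 1. mmult v w \<in> eigsp L 1)
          \<and> (\<forall>v\<in>eigsp L (1::'r). \<forall>w\<in>eigsp L 1. mmult v w \<in> Ann)"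
    unfolding lines_def
    by (rule ball4, rule props_1[OF assms], rule props_2[OF assms], rule props_3[OF assms], rule props_4[OF assms])
next
  define E1 where "E1 = {v::pt\<Rightarrow>'r. v Px = v Pa \<and> v Py = v Pb \<and> v Pz = v Pc}"
  have e: "eigsp {Pa,Pb,Pc} (1::'r) = E1" "eigsp {Pa,Py,Pz} (1::'r) = E1"
          "eigsp {Pb,Px,Pz} (1::'r) = E1" "eigsp {Pc,Px,Py} (1::'r) = E1"
    unfolding E1_def
    by (rule set_eqI, simp only: mem_Collect_eq eig1_1[OF assms] eig1_2[OF assms] eig1_3[OF assms] eig1_4[OF assms])+
  have E: "\<And>L. L \<in> lines \<Longrightarrow> eigsp L (1::'r) = E1"
    unfolding lines_def using e by (elim insertE emptyE) simp_all
  show "\<forall>L\<in>lines. \<forall>L'\<in>lines. eigsp L (1::'r) = eigsp L' 1" using E by simp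
qed

end
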